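(* Let $\mathbf{X}_z\in\{0,1\}^{M_z\times N}$, $\mathbf{X}_p\in\{0,1\}^{M_p\times N}$, $1\le L\le N$, $0<\epsilon_0<1$, and let $(\underline{z},\underline{\mu},\underline{\lambda}_1,\underline{\lambda}_2,\nu)$ satisfy the KKT conditions described in the context. If $\underline{\lambda}_2(i)>0$ for some $i\in[N]$, then $\underline{\mu}^T\mathbf{X}_p(:,i)=0$.
   Context: $\underline{1}_n,\underline{0}_n$ denote all-ones/all-zeros vectors, $\preccurlyeq$ componentwise inequality, $\circ$ componentwise product, $\mathbf{X}_p(:,i)$ the $i$-th column of $\mathbf{X}_p$. Consider the linear program: minimize $\underline{1}_{M_z}^T\mathbf{X}_z\underline{z}$ over $\underline{z}\in\mathbb{R}^N$ subject to $\mathbf{X}_p\underline{z}\succcurlyeq(1-\epsilon_0)\underline{1}_{M_p}$, $\underline{0}_N\preccurlyeq\underline{z}\preccurlyeq\underline{1}_N$, $\underline{1}_N^T\underline{z}\ge N-L$. With dual variables $\underline{\mu}\in\mathbb{R}^{M_p}$, $\underline{\lambda}_1,\underline{\lambda}_2\in\mathbb{R}^N$, $\nu\in\mathbb{R}$, its KKT conditions are: $\underline{1}_{M_z}^T\mathbf{X}_z-\underline{\mu}^T\mathbf{X}_p-\underline{\lambda}_1^T+\underline{\lambda}_2^T-\nu\underline{1}_N^T=\underline{0}_N^T$; $\underline{\mu}\circ(\mathbf{X}_p\underline{z}-(1-\epsilon_0)\underline{1}_{M_p})=\underline{0}_{M_p}$, $\underline{\lambda}_1\circ\underline{z}=\underline{0}_N$,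 $\underline{\lambda}_2\circ(\underline{z}-\underline{1}_N)=\underline{0}_N$, $\nu(\underline{1}_N^T\underline{z}-(N-L))=0$; $\underline{0}_N\preccurlyeq\underline{z}\preccurlyeq\underline{1}_N$, $\underline{1}_N^T\underline{z}\ge N-L$, $\underline{\mu}\succcurlyeq\underline{0}_{M_p}$, $\underline{\lambda}_1\succcurlyeq\underline{0}_N$, $\underline{\lambda}_2\succcurlyeq\underline{0}_N$, $\nu\ge0$. *)

theory Defs
  imports "HOL-Analysis.Analysis"
begin

end

theory Submission
  imports Defs
begin

theorem proposition5:
  fixes Xz :: "real^'n^'mz" and Xp :: "real^'n^'mp"
    and L :: nat and eps0 :: real
    and z :: "real^'n" and mu :: "real^'mp" and lam1 lam2 :: "real^'n" and nu :: real
    and i :: 'n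
  assumes Xz01: "\<forall>j k. Xz $ j $ k \<in> {0, 1}"
    and Xp01: "\<forall>j k. Xp $ j $ k \<in> {0, 1}"
    and L_ge: "1 \<le> L" and L_le: "L \<le> CARD('n)"
    and eps_pos: "0 < eps0" and eps_lt: "eps0 < 1"
    and stat: "(vec 1 v* Xz) - (mu v* Xp) - lam1 + lam2 - nu *\<^sub>R vec 1 = 0"
    and cs_mu: "\<forall>k. mu $ k * ((Xp *v z) $ k - (1 - eps0)) = 0"
    and cs_l1: "\<forall>k. lam1 $ k * z $ k = 0"
    and cs_l2: "\<forall>k. lam2 $ k * (z $ k - 1) = 0"
    and cs_nu: "nu * (sum (\<lambda>k. z $ k) UNIV - (real CARD('n) - real L)) = 0"
    and z_ge: "0 \<le> z" and z_le: "z \<le> vec 1"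
    and z_sum: "sum (\<lambda>k. z $ k) UNIV \<ge> real CARD('n) - real L"
    and pfeas: "Xp *v z \<ge> vec (1 - eps0)"
    and mu_ge: "0 \<le> mu" and l1_ge: "0 \<le> lam1" and l2_ge: "0 \<le> lam2" and nu_ge: "0 \<le> nu"
    and l2_pos: "lam2 $ i > 0"
  shows "(mu v* Xp) $ i = 0"
proof -
  have zi: "z $ i = 1" using cs_l2 l2_pos by (metis eq_iff_diff_eq_0 less_irrefl mult_eq_0_iff)
  have zg: "\<And>j. 0 \<le> z $ j" using z_ge by (simp add: less_eq_vec_def)
  have term0: "Xp $ k $ i * mu $ k = 0" for k
  proof (cases "Xp $ k $ i = 0")
    case True then show ?thesis by simp
  next
    case False
    hence one: "Xp $ k $ i = 1" using Xp01 by auto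
    have nn: "\<And>j. 0 \<le> Xp $ k $ j * z $ j"
      using Xp01 zg by (metis insert_iff mult_nonneg_nonneg order_refl singletonD zero_le_one)
    have "Xp $ k $ i * z $ i \<le> (\<Sum>j\<in>UNIV. Xp $ k $ j * z $ j)"
      by (rule member_le_sum) (use nn in auto)
    hence "(Xp *v z) $ k \<ge> 1" using one zi by (simp add: matrix_vector_mult_def)
    hence "(Xp *v z) $ k - (1 - eps0) \<noteq> 0" using eps_pos by linarith
    hence "mu $ k = 0" using cs_mu by auto
    thus ?thesis by simp
  qed
  show ?thesis unfolding vector_matrix_mult_def using term0 by (simp add: mult.commute[of "mu $ _"] sum.neutral)
qed

end
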